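(* Let $r>0$, $\tau>0$, $\kappa>0$, $p\in[0,1]$ and $\varepsilon=pe^{-\tau}$. Let $\psi=(\psi_S,\psi_I,\psi_Q):[-\tau-\kappa,0]\to\mathbb{R}^3$ be a piecewise continuous function with values in the simplex $\Delta^2=\{u\in\mathbb{R}^3: u_1+u_2+u_3=1,\ u_i\ge 0\}$, and assume \[ \psi_I(0)\ \ge\ rp\int_{-\tau}^{0}e^{\theta}\psi_S(\theta)\psi_I(\theta)\,d\theta,\qquad \psi_Q(0)\ \ge\ r\varepsilon\int_{-\tau-\kappa}^{0}\psi_S(\theta)\psi_I(\theta)\,d\theta . \] Let $x(t;\psi)=(S(t),I(t),Q(t))$, $t\ge 0$, be the solution of the SIQ system with initial history $\psi$. Then $S(t),I(t),Q(t)\ge 0$ and $S(t)+I(t)+Q(t)=1$ for all $t\ge 0$, and $x_t(\psi)\in\tilde{\mathcal{C}}$ for all $t\ge\tau+\kappa$. In particular, if in addition $\psi\in\tilde{\mathcal{C}}$ (i.e. $\psi$ is continuous), then $x_t(\psi)\in\tilde{\mathcal{C}}$ for all $t\ge 0$.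
   Context: The SIQ system is the system of delay differential equations \[ \dot S(t)=-rS(t)I(t)+I(t)+r\varepsilon S(t-\tau-\kappa)I(t-\tau-\kappa),\quad \dot I(t)=rS(t)I(t)-I(t)-r\varepsilon S(t-\tau)I(t-\tau), \] \[ \dot Q(t)=r\varepsilon\big[S(t-\tau)I(t-\tau)-S(t-\tau-\kappa)I(t-\tau-\kappa)\big], \] with parameters $r>0,\tau>0,\kappa>0,p\in[0,1]$, $\varepsilon=pe^{-\tau}$. Given an initial history $\psi$ on $[-\tau-\kappa,0]$, $x(t;\psi)$ denotes the solution for $t\ge0$ with $x(\theta;\psi)=\psi(\theta)$ for $\theta\in[-\tau-\kappa,0]$, and $x_t(\psi)(\theta)=x(t+\theta;\psi)$, $\theta\in[-\tau-\kappa,0]$. $\tilde{\mathcal{C}}$ denotes the set of continuous functions $\phi:[-\tau-\kappa,0]\to\mathbb{R}^3$ with $\phi(\theta)\in\Delta^2$ for all $\theta$. *)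

theory Defs
  imports "HOL-Analysis.Analysis"
begin

definition in_simplex :: "real \<times> real \<times> real \<Rightarrow> bool" where
  "in_simplex u \<longleftrightarrow> fst u \<ge> 0 \<and> fst (snd u) \<ge> 0 \<and> snd (snd u) \<ge> 0
      \<and> fst u + fst (snd u) + snd (snd u) = 1"

definition piecewise_continuous_on ::
  "real \<Rightarrow> real \<Rightarrow> (real \<Rightarrow> 'a::topological_space) \<Rightarrow> bool" where
  "piecewise_continuous_on a b f \<longleftrightarrow>
     (\<exists>D. finite D \<and>
        (\<forall>x\<in>{a..b} - D. continuous (at x within {a..b}) f) \<and>
        (\<forall>d\<in>D \<inter> {a..b}.
           (a < d \<longrightarrow> (\<exists>l. (f \<longlongrightarrow> l) (at_left d))) \<and>
           (d < b \<longrightarrow> (\<exists>l. (f \<longlongrightarrow> l) (at_right d)))))"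

definition Ctilde :: "real \<Rightarrow> real \<Rightarrow> (real \<Rightarrow> real \<times> real \<times> real) \<Rightarrow> bool" where
  "Ctilde \<tau> \<kappa> \<phi> \<longleftrightarrow> continuous_on {-\<tau>-\<kappa>..0} \<phi> \<and> (\<forall>\<theta>\<in>{-\<tau>-\<kappa>..0}. in_simplex (\<phi> \<theta>))"

text \<open>Solution of the SIQ system with initial history psi (in integral/Caratheodory sense,
  since psi is only piecewise continuous): x = psi on [-tau-kappa,0], x continuous on [0,oo),
  and x(t) = x(0) + integral of the right-hand side over [0,t] for t >= 0.\<close>

definition SIQ_solution ::
  "real \<Rightarrow> real \<Rightarrow> real \<Rightarrow> real \<Rightarrow> (real \<Rightarrow> real \<times> real \<times> real)
     \<Rightarrow> (real \<Rightarrow> real) \<Rightarrow> (real \<Rightarrow> real) \<Rightarrow> (real \<Rightarrow> real) \<Rightarrow> bool" where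
  "SIQ_solution r \<tau> \<kappa> p \<psi> S I Q \<longleftrightarrow>
     (let \<epsilon> = p * exp (-\<tau>) in
     (\<forall>\<theta>\<in>{-\<tau>-\<kappa>..0}. (S \<theta>, I \<theta>, Q \<theta>) = \<psi> \<theta>) \<and>
     continuous_on {0..} S \<and> continuous_on {0..} I \<and> continuous_on {0..} Q \<and>
     (\<forall>t\<ge>0.
        ((\<lambda>s. - r * S s * I s + I s + r * \<epsilon> * S (s - \<tau> - \<kappa>) * I (s - \<tau> - \<kappa>))
           has_integral (S t - S 0)) {0..t} \<and>
        ((\<lambda>s. r * S s * I s - I s - r * \<epsilon> * S (s - \<tau>) * I (s - \<tau>))
           has_integral (I t - I 0)) {0..t} \<and>
        ((\<lambda>s. r * \<epsilon> * (S (s - \<tau>) * I (s - \<tau>) - S (s - \<tau> - \<kappa>) * I (s - \<tau> - \<kappa>)))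
           has_integral (Q t - Q 0)) {0..t}))"

end

theory Submission
  imports Defs
begin
lemma int_diff:
  fixes h f :: "real \<Rightarrow> real"
  assumes "\<forall>t\<ge>0. (h has_integral (f t - f 0)) {0..t}" "0 \<le> a" "a \<le> b"
  shows "(h has_integral (f b - f a)) {a..b}"
proof -
  have hb: "(h has_integral (f b - f 0)) {0..b}" using assms by auto
  have ha: "(h has_integral (f a - f 0)) {0..a}" using assms by auto
  have ib: "h integrable_on {0..b}" using hb by blast
  have iab: "h integrable_on {a..b}" using integrable_subinterval_real[OF ib] assms by auto
  have "integral {0..a} h + integral {a..b} h = integral {0..b} h"
    using Henstock_Kurzweil_Integration.integral_combine[OF _ _ ib] assms by auto
  moreover have "integral {0..b} h = f b - f 0" using hb by (rule integral_unique)
  moreover have "integral {0..a} h = f a - f 0" using ha by (rule integral_unique)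
  ultimately have "integral {a..b} h = f b - f a" by linarith
  with integrable_integral[OF iab] show ?thesis by simp
qed

lemma int_lbound:
  fixes h :: "real \<Rightarrow> real"
  assumes "(h has_integral v) {a..b}" "a \<le> b" "\<And>x. x \<in> {a..b} \<Longrightarrow> h x \<ge> - L"
  shows "v \<ge> - L * (b - a)"
proof -
  have "((\<lambda>x. - L) has_integral (b - a) *\<^sub>R (-L)) {a..b}"
    using has_integral_const_real[of "-L" a b] assms(2) by simp
  from has_integral_le[OF this assms(1)] assms(3) show ?thesis by (auto simp: algebra_simps)
qed

lemma last_zero:
  fixes f :: "real \<Rightarrow> real"
  assumes "continuous_on {a..b} f" "a \<le> b" "f a \<ge> 0" "f b < 0"
  shows "\<exists>t1. a \<le> t1 \<and> t1 \<le> b \<and> f t1 = 0 \<and> (\<forall>x. t1 \<le> x \<longrightarrow> x \<le> b \<longrightarrow> f x \<le> 0)"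
proof -
  define Z where "Z = {a..b} \<inter> f -` {0}"
  have cl: "closed Z" unfolding Z_def by (rule continuous_closed_preimage[OF assms(1)]) auto
  obtain z where z: "a \<le> z" "z \<le> b" "f z = 0" using IVT2'[of f b 0 a] assms by auto
  have ne: "Z \<noteq> {}" using z unfolding Z_def by auto
  have bdd: "bdd_above Z" unfolding Z_def by (auto intro: bdd_aboveI[of _ b])
  define t1 where "t1 = Sup Z"
  have t1Z: "t1 \<in> Z" unfolding t1_def using closed_contains_Sup[OF ne bdd cl] .
  have ub: "\<And>x. x \<in> Z \<Longrightarrow> x \<le> t1" unfolding t1_def using bdd by (simp add: cSup_upper)
  have "f x \<le> 0" if x: "t1 \<le> x" "x \<le> b" for x
  proof (rule ccontr)
    assume "\<not> f x \<le> 0"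
    then have fx: "f x > 0" by simp
    have "continuous_on {x..b} f" using assms(1) t1Z x unfolding Z_def
      by (auto intro: continuous_on_subset)
    then obtain y where y: "x \<le> y" "y \<le> b" "f y = 0" using IVT2'[of f b 0 x] fx assms x by auto
    have "y \<in> Z" using y t1Z x unfolding Z_def by auto
    then have "y \<le> t1" by (rule ub)
    then have "x = t1" using x y by auto
    then show False using fx t1Z unfolding Z_def by auto
  qed
  then show ?thesis using t1Z unfolding Z_def by auto
qed

lemma prod_lb:
  fixes x y B n :: real
  assumes "\<bar>x\<bar> \<le> B" "\<bar>y\<bar> \<le> B" "- x \<le> n" "- y \<le> n" "0 \<le> n"
  shows "x * y \<ge> - (B * n)"
proof -
  have B0: "0 \<le> B * n" using assms(1,5) by simp
  consider "x \<ge> 0" "y \<ge> 0" | "x \<ge> 0" "y < 0" | "x < 0" "y \<ge> 0" | "x < 0" "y < 0" by linarith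
  then show ?thesis
  proof cases
    case 1
    then have "0 \<le> x * y" by simp
    then show ?thesis using B0 by linarith
  next
    case 2
    have "x * (-y) \<le> B * n" using 2 assms by (intro mult_mono) auto
    then show ?thesis by simp
  next
    case 3
    have "(-x) * y \<le> n * B" using 3 assms by (intro mult_mono) auto
    then show ?thesis by (simp add: mult.commute)
  next
    case 4
    then have "0 \<le> x * y" by (simp add: zero_le_mult_iff)
    then show ?thesis using B0 by linarith
  qed
qed

lemma indef_deriv:
  fixes f :: "real \<Rightarrow> real"
  assumes "f integrable_on {a..b}" "a < x" "x < b" "isCont f x"
  shows "((\<lambda>u. integral {a..u} f) has_real_derivative f x) (at x)"
proof -
  have "((\<lambda>u. integral {a..u} f) has_vector_derivative f x) (at x within ({a..b} - {}))"
    using assms by (intro integral_has_vector_derivative_continuous_at)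
      (auto intro: continuous_at_imp_continuous_within)
  then have "((\<lambda>u. integral {a..u} f) has_vector_derivative f x) (at x)"
    using at_within_Icc_at[of a x b] assms by simp
  then show ?thesis by (simp add: has_real_derivative_iff_has_vector_derivative)
qed




theorem lemma1:
  fixes r \<tau> \<kappa> p :: real
    and \<psi> :: "real \<Rightarrow> real \<times> real \<times> real"
    and S I Q :: "real \<Rightarrow> real"
  assumes "r > 0" and "\<tau> > 0" and "\<kappa> > 0" and "0 \<le> p" and "p \<le> 1"
    and "piecewise_continuous_on (-\<tau>-\<kappa>) 0 \<psi>"
    and "\<forall>\<theta>\<in>{-\<tau>-\<kappa>..0}. in_simplex (\<psi> \<theta>)"
    and "fst (snd (\<psi> 0)) \<ge>
           r * p * integral {-\<tau>..0} (\<lambda>\<theta>. exp \<theta> * fst (\<psi> \<theta>) * fst (snd (\<psi> \<theta>)))"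
    and "snd (snd (\<psi> 0)) \<ge>
           r * (p * exp (-\<tau>)) * integral {-\<tau>-\<kappa>..0} (\<lambda>\<theta>. fst (\<psi> \<theta>) * fst (snd (\<psi> \<theta>)))"
    and "SIQ_solution r \<tau> \<kappa> p \<psi> S I Q"
  shows "(\<forall>t\<ge>0. S t \<ge> 0 \<and> I t \<ge> 0 \<and> Q t \<ge> 0 \<and> S t + I t + Q t = 1)
       \<and> (\<forall>t\<ge>\<tau>+\<kappa>. Ctilde \<tau> \<kappa> (\<lambda>\<theta>. (S (t+\<theta>), I (t+\<theta>), Q (t+\<theta>))))
       \<and> (Ctilde \<tau> \<kappa> \<psi> \<longrightarrow> (\<forall>t\<ge>0. Ctilde \<tau> \<kappa> (\<lambda>\<theta>. (S (t+\<theta>), I (t+\<theta>), Q (t+\<theta>)))))"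
proof -
  note r0 = assms(1) and tau0 = assms(2) and kap0 = assms(3) and p0 = assms(4) and p1 = assms(5)
  define \<epsilon> where "\<epsilon> = p * exp (-\<tau>)"
  have eps0: "\<epsilon> \<ge> 0" unfolding \<epsilon>_def using p0 by simp
  define hS where "hS = (\<lambda>s. - r * S s * I s + I s + r * \<epsilon> * S (s - \<tau> - \<kappa>) * I (s - \<tau> - \<kappa>))"
  define hI where "hI = (\<lambda>s. r * S s * I s - I s - r * \<epsilon> * S (s - \<tau>) * I (s - \<tau>))"
  define hQ where "hQ = (\<lambda>s. r * \<epsilon> * (S (s - \<tau>) * I (s - \<tau>) - S (s - \<tau> - \<kappa>) * I (s - \<tau> - \<kappa>)))"
  have sol: "(\<forall>\<theta>\<in>{-\<tau>-\<kappa>..0}. (S \<theta>, I \<theta>, Q \<theta>) = \<psi> \<theta>) \<and>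
     continuous_on {0..} S \<and> continuous_on {0..} I \<and> continuous_on {0..} Q \<and>
     (\<forall>t\<ge>0. (hS has_integral (S t - S 0)) {0..t} \<and> (hI has_integral (I t - I 0)) {0..t}
        \<and> (hQ has_integral (Q t - Q 0)) {0..t})"
    using assms(10) unfolding SIQ_solution_def Let_def \<epsilon>_def[symmetric] hS_def hI_def hQ_def
    by blast
  have hist: "\<And>\<theta>. \<theta> \<in> {-\<tau>-\<kappa>..0} \<Longrightarrow> (S \<theta>, I \<theta>, Q \<theta>) = \<psi> \<theta>" using sol by blast
  have histc: "S \<theta> = fst (\<psi> \<theta>) \<and> I \<theta> = fst (snd (\<psi> \<theta>)) \<and> Q \<theta> = snd (snd (\<psi> \<theta>))"
    if "\<theta> \<in> {-\<tau>-\<kappa>..0}" for \<theta> using hist[OF that, symmetric] by simp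
  have cS: "continuous_on {0..} S" and cI: "continuous_on {0..} I" and cQ: "continuous_on {0..} Q"
    using sol by blast+
  have eS: "\<forall>t\<ge>0. (hS has_integral (S t - S 0)) {0..t}" 
   and eI: "\<forall>t\<ge>0. (hI has_integral (I t - I 0)) {0..t}"
   and eQ: "\<forall>t\<ge>0. (hQ has_integral (Q t - Q 0)) {0..t}" using sol by blast+
  have histv: "0 \<le> S \<theta> \<and> S \<theta> \<le> 1 \<and> 0 \<le> I \<theta> \<and> I \<theta> \<le> 1 \<and> 0 \<le> Q \<theta> \<and> S \<theta> + I \<theta> + Q \<theta> = 1"
    if "\<theta> \<in> {-\<tau>-\<kappa>..0}" for \<theta>
    using assms(7) hist[OF that] that unfolding in_simplex_def
    by (metis fst_conv snd_conv add_increasing2 le_add_same_cancel1 add.commute add.assoc)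
  obtain D where Dfin: "finite D" and
    Dcont: "\<And>x. x \<in> {-\<tau>-\<kappa>..0} - D \<Longrightarrow> continuous (at x within {-\<tau>-\<kappa>..0}) \<psi>"
    using assms(6) unfolding piecewise_continuous_on_def by blast
  have CG: "isCont S u \<and> isCont I u" if u: "-\<tau>-\<kappa> < u" "u \<noteq> 0" "u < 0 \<Longrightarrow> u \<notin> D" for u
  proof (cases "u > 0")
    case True
    then have "u \<in> interior {0..}" by simp
    then show ?thesis using cS cI continuous_on_interior by blast
  next
    case False
    then have ul: "u < 0" using u by simp
    have "continuous (at u within {-\<tau>-\<kappa>..0}) \<psi>" using Dcont u ul by force
    then have cpsi: "isCont \<psi> u" using at_within_Icc_at[of "-\<tau>-\<kappa>" u 0] u ul by simp
    have ev: "\<forall>\<^sub>F x in nhds u. x \<in> {-\<tau>-\<kappa><..<0}"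
      using u ul by (intro eventually_nhds_in_open) auto
    have evS: "\<forall>\<^sub>F x in nhds u. fst (\<psi> x) = S x"
      using ev by eventually_elim (use histc in auto)
    have evI: "\<forall>\<^sub>F x in nhds u. fst (snd (\<psi> x)) = I x"
      using ev by eventually_elim (use histc in auto)
    have "isCont (\<lambda>x. fst (\<psi> x)) u" "isCont (\<lambda>x. fst (snd (\<psi> x))) u"
      using cpsi by (auto intro!: continuous_intros)
    then show ?thesis using isCont_cong[OF evS] isCont_cong[OF evI] by simp
  qed
  define g where "g = (\<lambda>s. S s * I s)"
  have bnd: "\<exists>B\<ge>1. \<forall>x\<in>{-\<tau>-\<kappa>..X}. \<bar>S x\<bar> \<le> B \<and> \<bar>I x\<bar> \<le> B" if X0: "0 \<le> X" for X
  proof -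
    have "compact (S ` {0..X})"
      by (rule compact_continuous_image) (use cS in \<open>auto intro: continuous_on_subset\<close>)
    then obtain a1 where a1: "\<forall>y\<in>S ` {0..X}. norm y \<le> a1"
      using compact_imp_bounded bounded_iff by metis
    have "compact (I ` {0..X})"
      by (rule compact_continuous_image) (use cI in \<open>auto intro: continuous_on_subset\<close>)
    then obtain a2 where a2: "\<forall>y\<in>I ` {0..X}. norm y \<le> a2"
      using compact_imp_bounded bounded_iff by metis
    define B where "B = max 1 (max a1 a2)"
    have "\<bar>S x\<bar> \<le> B \<and> \<bar>I x\<bar> \<le> B" if x: "x \<in> {-\<tau>-\<kappa>..X}" for x
    proof (cases "x \<le> 0")
      case True
      then have "x \<in> {-\<tau>-\<kappa>..0}" using x by auto
      from histv[OF this] show ?thesis unfolding B_def by auto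
    next
      case False
      then have "x \<in> {0..X}" using x by auto
      then have "\<bar>S x\<bar> \<le> a1" "\<bar>I x\<bar> \<le> a2" using a1 a2 by auto
      then show ?thesis unfolding B_def by linarith
    qed
    moreover have "B \<ge> 1" unfolding B_def by simp
    ultimately show ?thesis by blast
  qed
  have gint: "g integrable_on {-\<tau>-\<kappa>..X}" if pp: "p > 0" and X0: "0 \<le> X" for X
  proof -
    define t where "t = X + \<tau> + \<kappa>"
    have t0: "t \<ge> 0" unfolding t_def using X0 tau0 kap0 by simp
    have i1: "hS integrable_on {0..t}" using eS t0 by blast
    have i2: "(\<lambda>s. - r * S s * I s + I s) integrable_on {0..t}"
      by (rule integrable_continuous_interval)
        (use cS cI in \<open>auto intro!: continuous_intros intro: continuous_on_subset\<close>)
    have "(\<lambda>s. hS s - (- r * S s * I s + I s)) integrable_on {0..t}"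
      using integrable_diff[OF i1 i2] .
    moreover have "(\<lambda>s. hS s - (- r * S s * I s + I s)) = (\<lambda>s. (r * \<epsilon>) * g (s + (-\<tau>-\<kappa>)))"
      unfolding hS_def g_def by (auto simp: algebra_simps)
    ultimately have "(\<lambda>s. (r * \<epsilon>) * g (s + (-\<tau>-\<kappa>))) integrable_on {0..t}" by simp
    moreover have "r * \<epsilon> \<noteq> 0" unfolding \<epsilon>_def using r0 pp by simp
    ultimately have "(\<lambda>s. g (s + (-\<tau>-\<kappa>))) integrable_on {0..t}"
      using integrable_on_mult_right_iff by blast
    moreover have "{0..t} = {(-\<tau>-\<kappa>) - (-\<tau>-\<kappa>)..X - (-\<tau>-\<kappa>)}" unfolding t_def by simp
    ultimately show ?thesis using integrable_shift_real_ivl_iff[of g "-\<tau>-\<kappa>" "-\<tau>-\<kappa>" X] by simp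
  qed
  have egint: "(\<lambda>\<theta>. exp \<theta> * g \<theta>) integrable_on {-\<tau>-\<kappa>..X}" if pp: "p > 0" and X0: "0 \<le> X" for X
  proof -
    obtain B where B: "B \<ge> 1" "\<forall>x\<in>{-\<tau>-\<kappa>..X}. \<bar>S x\<bar> \<le> B \<and> \<bar>I x\<bar> \<le> B"
      using bnd[OF X0] by blast
    have m1: "g \<in> borel_measurable (lebesgue_on {-\<tau>-\<kappa>..X})"
      using gint[OF pp X0] by (rule integrable_imp_measurable)
    have m2: "exp \<in> borel_measurable (lebesgue_on {-\<tau>-\<kappa>..X})"
      by (rule continuous_imp_measurable_on_sets_lebesgue) (auto intro: continuous_intros)
    have m: "(\<lambda>\<theta>. exp \<theta> * g \<theta>) \<in> borel_measurable (lebesgue_on {-\<tau>-\<kappa>..X})"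
      using borel_measurable_times[OF m2 m1] .
    have "norm (exp \<theta> * g \<theta>) \<le> exp X * (B * B)" if th: "\<theta> \<in> {-\<tau>-\<kappa>..X}" for \<theta>
    proof -
      have "\<bar>g \<theta>\<bar> \<le> B * B" unfolding g_def abs_mult using B th by (intro mult_mono) auto
      moreover have "exp \<theta> \<le> exp X" using th by simp
      ultimately show ?thesis unfolding norm_mult by (intro mult_mono) auto
    qed
    then show ?thesis
      by (intro measurable_bounded_by_integrable_imp_integrable[OF m integrable_const_ivl]) auto
  qed
  define F where "F = (\<lambda>u. integral {-\<tau>-\<kappa>..u} (\<lambda>\<theta>. exp \<theta> * g \<theta>))"
  define J where "J = (\<lambda>t. I t - r * p * exp (-t) * (F t - F (t - \<tau>)))"
  define E where "E = insert \<tau> ((\<lambda>d. d + \<tau>) ` D)"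
  have Efin: "finite E" unfolding E_def using Dfin by simp
  have Jcont: "continuous_on {0..X} J" if X0: "0 \<le> X" for X
  proof (cases "p = 0")
    case True
    then have "J = I" unfolding J_def by auto
    then show ?thesis using cI by (auto intro: continuous_on_subset)
  next
    case False
    then have pp: "p > 0" using p0 by simp
    have Fc: "continuous_on {-\<tau>-\<kappa>..X} F"
      unfolding F_def by (rule indefinite_integral_continuous_1[OF egint[OF pp X0]])
    have Fc1: "continuous_on {0..X} F" using Fc tau0 kap0 by (auto intro: continuous_on_subset)
    have Fc2: "continuous_on {0..X} (\<lambda>t. F (t - \<tau>))"
      by (rule continuous_on_compose2[OF Fc, of "{0..X}" "\<lambda>t. t - \<tau>"])
        (use tau0 kap0 X0 in \<open>auto intro!: continuous_intros\<close>)
    have "continuous_on {0..X} I" using cI by (auto intro: continuous_on_subset)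
    then show ?thesis unfolding J_def using Fc1 Fc2 by (auto intro!: continuous_intros)
  qed
  have shc: "isCont (\<lambda>s. f (s - c)) x" if "isCont f (x - c)" for f :: "real \<Rightarrow> real" and c x
  proof -
    have "isCont (f \<circ> (\<lambda>s. s - c)) x" by (rule continuous_at_compose) (auto simp: that)
    then show ?thesis by (simp add: o_def)
  qed
  have dI: "(I has_real_derivative hI x) (at x)" if x0: "0 < x" and xE: "x \<notin> E" for x
  proof -
    have c1: "isCont S x \<and> isCont I x" using CG[of x] x0 tau0 kap0 by simp
    have xD: "x - \<tau> \<notin> D" "x \<noteq> \<tau>" using xE unfolding E_def by force+
    have c2: "isCont S (x - \<tau>) \<and> isCont I (x - \<tau>)"
      using CG[of "x - \<tau>"] x0 tau0 kap0 xD by auto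
    have ch: "isCont hI x" unfolding hI_def using c1 c2 shc[where f=S and c=\<tau> and x=x] shc[where f=I and c=\<tau> and x=x]
      by (auto intro!: continuous_intros)
    have "(hI has_integral (I (x+1) - I 0)) {0..x+1}" using eI x0 by auto
    then have ii: "hI integrable_on {0..x+1}" by blast
    have "((\<lambda>u. integral {0..u} hI) has_real_derivative hI x) (at x)"
      using indef_deriv[OF ii _ _ ch] x0 by simp
    then have d: "((\<lambda>u. I 0 + integral {0..u} hI) has_real_derivative hI x) (at x)"
      by (auto intro!: derivative_eq_intros)
    show ?thesis
    proof (rule has_field_derivative_transform_within_open[OF d, of "{0<..}"])
      fix u :: real assume "u \<in> {0<..}"
      then have "integral {0..u} hI = I u - I 0" using eI integral_unique by auto
      then show "I 0 + integral {0..u} hI = I u" by simp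
    qed (use x0 in auto)
  qed
  have dF: "(F has_real_derivative exp y * g y) (at y)"
    if pp: "p > 0" and y: "-\<tau>-\<kappa> < y" "y \<noteq> 0" "y < 0 \<Longrightarrow> y \<notin> D" for y
  proof -
    have c: "isCont S y \<and> isCont I y" using CG y by blast
    have ch: "isCont (\<lambda>\<theta>. exp \<theta> * g \<theta>) y" unfolding g_def using c
      by (auto intro!: continuous_intros)
    have Y0: "0 \<le> \<bar>y\<bar> + 1" by simp
    have "y < \<bar>y\<bar> + 1" by simp
    from indef_deriv[OF egint[OF pp Y0] y(1) this ch] show ?thesis unfolding F_def .
  qed
  have Jder: "(J has_real_derivative (r * (1 - p) * g x - J x)) (at x)" if x0: "0 < x" and xE: "x \<notin> E" for x
  proof (cases "p = 0")
    case True
    then have JI: "J = I" unfolding J_def by auto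
    have "hI x = r * (1 - p) * g x - J x" unfolding JI hI_def g_def \<epsilon>_def using True by simp
    then show ?thesis using dI[OF x0 xE] JI by simp
  next
    case False
    then have pp: "p > 0" using p0 by simp
    have xD: "x - \<tau> \<notin> D" "x \<noteq> \<tau>" using xE unfolding E_def by force+
    have d1: "(F has_real_derivative exp x * g x) (at x)" using dF[OF pp, of x] x0 tau0 kap0 by simp
    have d2: "(F has_real_derivative exp (x - \<tau>) * g (x - \<tau>)) (at (x - \<tau>))"
      using dF[OF pp, of "x - \<tau>"] x0 tau0 kap0 xD by simp
    have d3: "((\<lambda>t. t - \<tau>) has_real_derivative 1) (at x)" by (auto intro!: derivative_eq_intros)
    have d2': "((\<lambda>t. F (t - \<tau>)) has_real_derivative exp (x - \<tau>) * g (x - \<tau>) * 1) (at x)"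
      using DERIV_chain2[OF d2 d3] by simp
    have "(J has_real_derivative (hI x - r * p * ((- exp (-x)) * (F x - F (x - \<tau>)) + exp (-x) * (exp x * g x - exp (x - \<tau>) * g (x - \<tau>) * 1)))) (at x)"
      unfolding J_def
      apply (rule derivative_eq_intros dI[OF x0 xE] d1 d2' refl | simp)+
      by (simp add: algebra_simps)
    moreover have "hI x - r * p * ((- exp (-x)) * (F x - F (x - \<tau>)) + exp (-x) * (exp x * g x - exp (x - \<tau>) * g (x - \<tau>) * 1))
        = r * (1 - p) * g x - J x"
    proof -
      have e1: "exp (-x) * exp x = 1" by (simp add: exp_add[symmetric])
      have e2: "exp (-x) * exp (x - \<tau>) = exp (-\<tau>)" by (simp add: exp_add[symmetric])
      have e3: "exp (-x) * (exp x * g x - exp (x - \<tau>) * g (x - \<tau>) * 1) = g x - exp (-\<tau>) * g (x - \<tau>)"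
        by (simp add: right_diff_distrib mult.assoc[symmetric] e1 e2)
      show ?thesis unfolding e3 unfolding hI_def J_def g_def \<epsilon>_def by algebra
    qed
    ultimately show ?thesis by simp
  qed
  have Jint: "((\<lambda>x. r * (1 - p) * g x - J x) has_integral (J b - J a)) {a..b}"
    if ab: "0 \<le> a" "a \<le> b" for a b
  proof (rule fundamental_theorem_of_calculus_interior_strong[OF Efin ab(2)])
    fix x assume "x \<in> {a<..<b} - E"
    then have "0 < x" "x \<notin> E" using ab by auto
    from Jder[OF this] show "(J has_vector_derivative r * (1 - p) * g x - J x) (at x)"
      by (simp add: has_real_derivative_iff_has_vector_derivative)
  next
    show "continuous_on {a..b} J" using Jcont[of b] ab by (auto intro: continuous_on_subset)
  qed
  have J0: "J 0 \<ge> 0"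
  proof (cases "p = 0")
    case True
    then show ?thesis unfolding J_def using histv[of 0] tau0 kap0 by simp
  next
    case False
    then have pp: "p > 0" using p0 by simp
    have ii: "(\<lambda>\<theta>. exp \<theta> * g \<theta>) integrable_on {-\<tau>-\<kappa>..0}" using egint[OF pp] by simp
    have "F (-\<tau>) + integral {-\<tau>..0} (\<lambda>\<theta>. exp \<theta> * g \<theta>) = F 0"
      unfolding F_def using Henstock_Kurzweil_Integration.integral_combine[OF _ _ ii, of "-\<tau>"] tau0 kap0 by simp
    moreover have "integral {-\<tau>..0} (\<lambda>\<theta>. exp \<theta> * g \<theta>)
        = integral {-\<tau>..0} (\<lambda>\<theta>. exp \<theta> * fst (\<psi> \<theta>) * fst (snd (\<psi> \<theta>)))"
    proof (rule integral_cong)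
      fix \<theta> assume "\<theta> \<in> {-\<tau>..0}"
      then have "\<theta> \<in> {-\<tau>-\<kappa>..0}" using kap0 by auto
      from histc[OF this] show "exp \<theta> * g \<theta> = exp \<theta> * fst (\<psi> \<theta>) * fst (snd (\<psi> \<theta>))"
        unfolding g_def by simp
    qed
    moreover have "I 0 = fst (snd (\<psi> 0))" using histc[of 0] tau0 kap0 by simp
    ultimately have "F 0 - F (-\<tau>) = integral {-\<tau>..0} (\<lambda>\<theta>. exp \<theta> * fst (\<psi> \<theta>) * fst (snd (\<psi> \<theta>)))"
      "I 0 = fst (snd (\<psi> 0))" by linarith+
    then show ?thesis unfolding J_def using assms(8) by simp
  qed
  have nonneg: "\<forall>s\<in>{0..T}. S s \<ge> 0 \<and> I s \<ge> 0 \<and> J s \<ge> 0" if T0: "0 \<le> T" for T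
  proof -
    obtain B where B1: "B \<ge> 1" and Bb: "\<forall>x\<in>{-\<tau>-\<kappa>..T+\<tau>}. \<bar>S x\<bar> \<le> B \<and> \<bar>I x\<bar> \<le> B"
      using bnd[of "T+\<tau>"] T0 tau0 by auto
    define c where "c = 2 * r * B + 1"
    have rB0: "r * B \<ge> 0" using r0 B1 by simp
    have c0: "c \<ge> 1" unfolding c_def using rB0 by (simp add: mult.commute)
    define \<delta> where "\<delta> = min \<tau> (1 / (2 * c))"
    have d0: "\<delta> > 0" unfolding \<delta>_def using tau0 c0 by simp
    have dtau: "\<delta> \<le> \<tau>" unfolding \<delta>_def by simp
    have "\<delta> \<le> 1 / (2 * c)" unfolding \<delta>_def by simp
    then have dc: "c * \<delta> \<le> 1/2" using c0 by (simp add: field_simps)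
    define Good where "Good = (\<lambda>t. \<forall>s\<in>{0..t}. S s \<ge> 0 \<and> I s \<ge> 0 \<and> J s \<ge> 0)"
    have step: "Good (T0 + \<delta>)" if a: "0 \<le> T0" "T0 + \<delta> \<le> T + \<tau>" "Good T0" for T0
    proof -
      define T1 where "T1 = T0 + \<delta>"
      have T01: "T0 \<le> T1" "T1 = T0 + \<delta>" "0 \<le> T1" using d0 a unfolding T1_def by auto
      define \<phi> where "\<phi> = (\<lambda>s. max 0 (max (- S s) (max (- I s) (- J s))))"
      have cS1: "continuous_on {T0..T1} S" using cS a by (auto intro: continuous_on_subset)
      have cI1: "continuous_on {T0..T1} I" using cI a by (auto intro: continuous_on_subset)
      have cJ1: "continuous_on {T0..T1} J" using Jcont[OF T01(3)] a by (auto intro: continuous_on_subset)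
      have cphi: "continuous_on {T0..T1} \<phi>" unfolding \<phi>_def using cS1 cI1 cJ1
        by (intro continuous_on_max continuous_on_minus continuous_on_const)
      obtain sm where sm: "sm \<in> {T0..T1}" "\<forall>y\<in>{T0..T1}. \<phi> y \<le> \<phi> sm"
        using continuous_attains_sup[OF compact_Icc _ cphi] T01 by auto
      define n where "n = \<phi> sm"
      have n0: "n \<ge> 0" unfolding n_def \<phi>_def by simp
      have negs: "- S s \<le> n \<and> - I s \<le> n \<and> - J s \<le> n" if "s \<in> {T0..T1}" for s
      proof -
        have "\<phi> s \<le> n" using sm that unfolding n_def by blast
        then show ?thesis unfolding \<phi>_def by linarith
      qed
      have Bs: "\<bar>S s\<bar> \<le> B \<and> \<bar>I s\<bar> \<le> B" if "s \<in> {-\<tau>-\<kappa>..T1}" for s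
        using Bb that a T01 by auto
      have gpos: "g s \<ge> 0" if s: "s \<in> {-\<tau>-\<kappa>..T0}" for s
      proof (cases "s \<le> 0")
        case True
        then have "s \<in> {-\<tau>-\<kappa>..0}" using s by auto
        from histv[OF this] show ?thesis unfolding g_def by simp
      next
        case False
        then have "s \<in> {0..T0}" using s by auto
        then show ?thesis using a(3) unfolding Good_def g_def by simp
      qed
      have Bn0: "B * n \<ge> 0" using B1 n0 by simp
      have glb: "g s \<ge> - (B * n)" if s: "s \<in> {T0..T1}" for s
      proof -
        have "s \<in> {-\<tau>-\<kappa>..T1}" using s a tau0 kap0 by auto
        then show ?thesis unfolding g_def using prod_lb[of "S s" B "I s" n] Bs negs[OF s] n0 by auto
      qed
      have nd0: "n * \<delta> \<ge> 0" using n0 d0 by simp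
      have cnd: "c * n * \<delta> = 2 * (r * B * n * \<delta>) + n * \<delta>" unfolding c_def by algebra
      have rbnd: "r * B * n * \<delta> \<ge> 0"
      proof -
        have e: "r * B * n * \<delta> = (r * B) * (n * \<delta>)" by algebra
        show ?thesis unfolding e using rB0 nd0 by (rule mult_nonneg_nonneg)
      qed
      have rbnd2: "(r * B + 1) * n * \<delta> = r * B * n * \<delta> + n * \<delta>" by algebra
      have Sb: "- S s \<le> c * n * \<delta>" if s: "s \<in> {T0..T1}" for s
      proof (cases "S s \<ge> 0")
        case True
        show ?thesis using True cnd nd0 rbnd by linarith
      next
        case False
        have "S T0 \<ge> 0" using a(3) a(1) unfolding Good_def by simp
        moreover have "continuous_on {T0..s} S" using cS1 s by (auto intro: continuous_on_subset)
        ultimately obtain t1 where t1: "T0 \<le> t1" "t1 \<le> s" "S t1 = 0" "\<forall>x. t1 \<le> x \<longrightarrow> x \<le> s \<longrightarrow> S x \<le> 0"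
          using last_zero[of T0 s S] False s by auto
        have hi: "(hS has_integral (S s - S t1)) {t1..s}" using int_diff[OF eS, of t1 s] t1 a by simp
        have lb: "hS x \<ge> - ((r * B + 1) * n)" if x: "x \<in> {t1..s}" for x
        proof -
          have xT: "x \<in> {T0..T1}" using x t1 s by auto
          have xB: "x \<in> {-\<tau>-\<kappa>..T1}" using xT a tau0 kap0 by auto
          have Sx: "S x \<le> 0" using t1 x by auto
          have p1: "(- S x) * I x \<ge> - (B * n)"
            using prod_lb[of "- S x" B "I x" n] Bs[OF xB] negs[OF xT] Sx n0 by auto
          have p2: "r * ((- S x) * I x) \<ge> r * (- (B * n))"
            using p1 r0 by (intro mult_left_mono) auto
          have "x - \<tau> - \<kappa> \<in> {-\<tau>-\<kappa>..T0}" using xT T01 dtau kap0 a by auto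
          then have p3: "r * \<epsilon> * g (x - \<tau> - \<kappa>) \<ge> 0" using gpos eps0 r0 by simp
          have p4: "I x \<ge> - n" using negs[OF xT] by simp
          have "hS x = r * ((- S x) * I x) + I x + r * \<epsilon> * g (x - \<tau> - \<kappa>)"
            unfolding hS_def g_def by (simp add: algebra_simps)
          then show ?thesis using p2 p3 p4 by (simp add: algebra_simps)
        qed
        have "S s - S t1 \<ge> - ((r * B + 1) * n) * (s - t1)"
          using int_lbound[OF hi _ lb] t1 by (simp add: algebra_simps)
        moreover have "(r * B + 1) * n * (s - t1) \<le> (r * B + 1) * n * \<delta>"
          using t1 s T01 rB0 n0 by (intro mult_left_mono) auto
        moreover have "(r * B + 1) * n * \<delta> \<le> c * n * \<delta>"
          using cnd rbnd rbnd2 by linarith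
        ultimately show ?thesis using t1 by (simp add: algebra_simps)
      qed
      have Jb: "- J s \<le> r * B * n * \<delta>" if s: "s \<in> {T0..T1}" for s
      proof (cases "J s \<ge> 0")
        case True
        show ?thesis using True rbnd by linarith
      next
        case False
        have "J T0 \<ge> 0" using a(3) a(1) unfolding Good_def by simp
        moreover have "continuous_on {T0..s} J" using cJ1 s by (auto intro: continuous_on_subset)
        ultimately obtain t1 where t1: "T0 \<le> t1" "t1 \<le> s" "J t1 = 0" "\<forall>x. t1 \<le> x \<longrightarrow> x \<le> s \<longrightarrow> J x \<le> 0"
          using last_zero[of T0 s J] False s by auto
        have hi: "((\<lambda>x. r * (1 - p) * g x - J x) has_integral (J s - J t1)) {t1..s}"
          using Jint[of t1 s] t1 a by simp
        have lb: "r * (1 - p) * g x - J x \<ge> - (r * B * n)" if x: "x \<in> {t1..s}" for x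
        proof -
          have xT: "x \<in> {T0..T1}" using x t1 s by auto
          have Jx: "J x \<le> 0" using t1 x by auto
          have q1: "(1 - p) * g x \<ge> (1 - p) * (- (B * n))"
            using glb[OF xT] p1 by (intro mult_left_mono) auto
          have q2: "(1 - p) * (- (B * n)) \<ge> - (B * n)"
          proof -
            have e: "(1 - p) * (- (B * n)) = - (B * n) + p * (B * n)" by algebra
            have "p * (B * n) \<ge> 0" using p0 Bn0 by (rule mult_nonneg_nonneg)
            then show ?thesis unfolding e by linarith
          qed
          have "r * ((1 - p) * g x) \<ge> r * (- (B * n))" using q1 q2 r0 by (intro mult_left_mono) auto
          then show ?thesis using Jx by (simp add: algebra_simps)
        qed
        have "J s - J t1 \<ge> - (r * B * n) * (s - t1)"
          using int_lbound[OF hi _ lb] t1 by (simp add: algebra_simps)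
        moreover have "r * B * n * (s - t1) \<le> r * B * n * \<delta>"
          using t1 s T01 rB0 n0 by (intro mult_left_mono) auto
        ultimately show ?thesis using t1 by (simp add: algebra_simps)
      qed
      have Fb: "r * p * exp (-s) * (F s - F (s - \<tau>)) \<ge> - (r * B * n * \<delta>)" if s: "s \<in> {T0..T1}" for s
      proof (cases "p = 0")
        case True
        show ?thesis using True rbnd by simp
      next
        case False
        then have pp: "p > 0" using p0 by simp
        let ?e = "\<lambda>\<theta>. exp \<theta> * g \<theta>"
        have ii: "?e integrable_on {-\<tau>-\<kappa>..T1}" using egint[OF pp T01(3)] .
        have s1: "-\<tau>-\<kappa> \<le> s - \<tau>" "s - \<tau> \<le> T0" "T0 \<le> s" "s \<le> T1"
          using s a kap0 dtau T01 by auto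
        have ii2: "?e integrable_on {-\<tau>-\<kappa>..s}" using integrable_subinterval_real[OF ii] s1 by auto
        have ii3: "?e integrable_on {s-\<tau>..s}" using integrable_subinterval_real[OF ii] s1 by auto
        have ii4: "?e integrable_on {s-\<tau>..T0}" using integrable_subinterval_real[OF ii] s1 by auto
        have ii5: "?e integrable_on {T0..s}" using integrable_subinterval_real[OF ii] s1 by auto
        have c1: "F (s - \<tau>) + integral {s-\<tau>..s} ?e = F s"
          unfolding F_def using Henstock_Kurzweil_Integration.integral_combine[OF _ _ ii2, of "s - \<tau>"] s1 by simp
        have c2: "integral {s-\<tau>..T0} ?e + integral {T0..s} ?e = integral {s-\<tau>..s} ?e"
          using Henstock_Kurzweil_Integration.integral_combine[OF _ _ ii3, of T0] s1 by simp
        have c3: "integral {s-\<tau>..T0} ?e \<ge> 0"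
        proof (rule integral_nonneg[OF ii4])
          fix x assume "x \<in> {s-\<tau>..T0}"
          then have "x \<in> {-\<tau>-\<kappa>..T0}" using s1 by auto
          from gpos[OF this] show "0 \<le> exp x * g x" by simp
        qed
        have lb: "?e x \<ge> - (exp s * (B * n))" if x: "x \<in> {T0..s}" for x
        proof -
          have xT: "x \<in> {T0..T1}" using x s1 by auto
          have "exp x * g x \<ge> exp x * (- (B * n))" using glb[OF xT] by (intro mult_left_mono) auto
          moreover have "exp x * (B * n) \<le> exp s * (B * n)" using x Bn0 by (intro mult_right_mono) auto
          ultimately show ?thesis by simp
        qed
        have c4: "integral {T0..s} ?e \<ge> - (exp s * (B * n) * (s - T0))"
          using int_lbound[OF integrable_integral[OF ii5] _ lb] s1 by simp
        have c5: "exp s * (B * n) * (s - T0) \<le> exp s * (B * n) * \<delta>"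
          using s1 T01 Bn0 by (intro mult_left_mono) auto
        have Fd: "F s - F (s - \<tau>) \<ge> - (exp s * (B * n) * \<delta>)" using c1 c2 c3 c4 c5 by linarith
        have K0: "r * p * exp (-s) \<ge> 0" using r0 p0 by simp
        have "r * p * exp (-s) * (F s - F (s - \<tau>)) \<ge> r * p * exp (-s) * (- (exp s * (B * n) * \<delta>))"
          using Fd K0 by (intro mult_left_mono) auto
        moreover have "r * p * exp (-s) * (- (exp s * (B * n) * \<delta>)) = - (p * (r * B * n * \<delta>))"
        proof -
          have "exp (-s) * exp s = 1" by (simp add: exp_add[symmetric])
          then show ?thesis by algebra
        qed
        moreover have "p * (r * B * n * \<delta>) \<le> r * B * n * \<delta>"
        proof -
          show ?thesis by (rule mult_left_le_one_le[OF rbnd p0 p1])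
        qed
        ultimately show ?thesis by linarith
      qed
      have Ib: "- I s \<le> c * n * \<delta>" if s: "s \<in> {T0..T1}" for s
      proof -
        have "I s = J s + r * p * exp (-s) * (F s - F (s - \<tau>))" unfolding J_def by simp
        then have "- I s \<le> 2 * (r * B * n * \<delta>)" using Jb[OF s] Fb[OF s] by linarith
        moreover have "2 * (r * B * n * \<delta>) \<le> c * n * \<delta>"
          using cnd nd0 by linarith
        ultimately show ?thesis by linarith
      qed
      have "n \<le> c * n * \<delta>"
      proof -
        have "0 \<le> c * n * \<delta>" using cnd nd0 rbnd by linarith
        moreover have "r * B * n * \<delta> \<le> c * n * \<delta>"
          using cnd nd0 rbnd by linarith
        ultimately have "max 0 (max (- S sm) (max (- I sm) (- J sm))) \<le> c * n * \<delta>"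
          using Sb[OF sm(1)] Ib[OF sm(1)] Jb[OF sm(1)] by simp
        moreover have "n = max 0 (max (- S sm) (max (- I sm) (- J sm)))" unfolding n_def \<phi>_def by simp
        ultimately show ?thesis by simp
      qed
      moreover have "c * n * \<delta> \<le> n / 2"
      proof -
        have "c * n * \<delta> = n * (c * \<delta>)" by simp
        also have "\<dots> \<le> n * (1/2)" using dc n0 by (intro mult_left_mono) auto
        finally show ?thesis by simp
      qed
      ultimately have nz: "n = 0" using n0 by linarith
      show ?thesis unfolding Good_def
      proof
        fix s assume s: "s \<in> {0..T0 + \<delta>}"
        show "S s \<ge> 0 \<and> I s \<ge> 0 \<and> J s \<ge> 0"
        proof (cases "s \<le> T0")
          case True
          then show ?thesis using a(3) s unfolding Good_def by auto
        next
          case False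
          then have "s \<in> {T0..T1}" using s T01 by auto
          from negs[OF this] show ?thesis using nz by simp
        qed
      qed
    qed
    have ind: "real k * \<delta> \<le> T \<longrightarrow> Good (real k * \<delta>)" for k :: nat
    proof (induction k)
      case 0
      have "S 0 \<ge> 0 \<and> I 0 \<ge> 0" using histv[of 0] tau0 kap0 by simp
      then show ?case unfolding Good_def using J0 by simp
    next
      case (Suc k)
      show ?case
      proof
        assume h: "real (Suc k) * \<delta> \<le> T"
        then have "real k * \<delta> \<le> T" using d0 by (simp add: algebra_simps)
        then have "Good (real k * \<delta>)" using Suc by simp
        moreover have "real k * \<delta> + \<delta> \<le> T + \<tau>" using h tau0 by (simp add: algebra_simps)
        ultimately have "Good (real k * \<delta> + \<delta>)" using step[of "real k * \<delta>"] d0 by simp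
        then show "Good (real (Suc k) * \<delta>)" by (simp add: algebra_simps)
      qed
    qed
    define k where "k = nat \<lfloor>T / \<delta>\<rfloor>"
    have rk: "real k = of_int \<lfloor>T / \<delta>\<rfloor>" unfolding k_def using T0 d0 by simp
    have "real k \<le> T / \<delta>" unfolding rk by simp
    then have k1: "real k * \<delta> \<le> T" using d0 by (simp add: field_simps)
    have "T / \<delta> < real k + 1" unfolding rk by linarith
    then have k2: "T < real k * \<delta> + \<delta>" using d0 by (simp add: field_simps)
    have "Good (real k * \<delta> + \<delta>)"
      using step[of "real k * \<delta>"] ind[of k] k1 d0 dtau tau0 by simp
    then show ?thesis unfolding Good_def using k2 by auto
  qed
  have SI: "S t \<ge> 0 \<and> I t \<ge> 0" if "t \<ge> 0" for t
    using nonneg[of t] that by auto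
  have gnn: "g s \<ge> 0" if "s \<ge> -\<tau>-\<kappa>" for s
  proof (cases "s \<le> 0")
    case True
    then have "s \<in> {-\<tau>-\<kappa>..0}" using that by auto
    from histv[OF this] show ?thesis unfolding g_def by simp
  next
    case False
    then show ?thesis using SI[of s] unfolding g_def by simp
  qed
  have sum1: "S t + I t + Q t = 1" if t0: "t \<ge> 0" for t
  proof -
    have "((\<lambda>s. hS s + hI s + hQ s) has_integral (S t - S 0 + (I t - I 0) + (Q t - Q 0))) {0..t}"
      using eS eI eQ t0 by (intro has_integral_add) auto
    moreover have "(\<lambda>s. hS s + hI s + hQ s) = (\<lambda>s. 0)"
      unfolding hS_def hI_def hQ_def by (rule ext) algebra
    ultimately have "S t - S 0 + (I t - I 0) + (Q t - Q 0) = 0"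
      using has_integral_unique[OF has_integral_0] by metis
    moreover have "S 0 + I 0 + Q 0 = 1" using histv[of 0] tau0 kap0 by simp
    ultimately show ?thesis by linarith
  qed
  have Qnn: "Q t \<ge> 0" if t0: "t \<ge> 0" for t
  proof (cases "p = 0")
    case True
    then have "hQ = (\<lambda>s. 0)" unfolding hQ_def \<epsilon>_def by simp
    then have "Q t - Q 0 = 0" using eQ t0 has_integral_unique[OF has_integral_0] by metis
    then show ?thesis using histv[of 0] tau0 kap0 by simp
  next
    case False
    then have pp: "p > 0" using p0 by simp
    have gi: "g integrable_on {-\<tau>-\<kappa>..t}" using gint[OF pp t0] .
    define F0 where "F0 = (\<lambda>u. integral {-\<tau>-\<kappa>..u} g)"
    have Fd: "integral {a..b} g = F0 b - F0 a \<and> integral {a..b} g \<ge> 0"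
      if ab: "-\<tau>-\<kappa> \<le> a" "a \<le> b" "b \<le> t" for a b
    proof -
      have gb: "g integrable_on {-\<tau>-\<kappa>..b}" using integrable_subinterval_real[OF gi] ab by auto
      have gab: "g integrable_on {a..b}" using integrable_subinterval_real[OF gi] ab by auto
      have "F0 a + integral {a..b} g = F0 b"
        unfolding F0_def using Henstock_Kurzweil_Integration.integral_combine[OF _ _ gb, of a] ab by simp
      moreover have "integral {a..b} g \<ge> 0"
        by (rule integral_nonneg[OF gab]) (use gnn ab in auto)
      ultimately show ?thesis by linarith
    qed
    have gi1: "g integrable_on {-\<tau>..t-\<tau>}" using integrable_subinterval_real[OF gi] tau0 kap0 t0 by auto
    have gi2: "g integrable_on {-\<tau>-\<kappa>..t-\<tau>-\<kappa>}" using integrable_subinterval_real[OF gi] tau0 kap0 t0 by auto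
    have i1: "((\<lambda>s. g (s - \<tau>)) has_integral (integral {-\<tau>..t-\<tau>} g)) {0..t}"
      using has_integral_shift_real_ivl[OF integrable_integral[OF gi1], of "-\<tau>"] by simp
    have i2: "((\<lambda>s. g (s - \<tau> - \<kappa>)) has_integral (integral {-\<tau>-\<kappa>..t-\<tau>-\<kappa>} g)) {0..t}"
    proof -
      have e: "(\<lambda>x. g (x + (-\<tau>-\<kappa>))) = (\<lambda>s. g (s - \<tau> - \<kappa>))" by (rule ext) (simp add: algebra_simps)
      show ?thesis
        using has_integral_shift_real_ivl[OF integrable_integral[OF gi2], of "-\<tau>-\<kappa>"] unfolding e by simp
    qed
    have "((\<lambda>s. r * \<epsilon> * (g (s - \<tau>) - g (s - \<tau> - \<kappa>))) has_integral
        r * \<epsilon> * (integral {-\<tau>..t-\<tau>} g - integral {-\<tau>-\<kappa>..t-\<tau>-\<kappa>} g)) {0..t}"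
      using has_integral_mult_right[OF has_integral_diff[OF i1 i2]] .
    moreover have "hQ = (\<lambda>s. r * \<epsilon> * (g (s - \<tau>) - g (s - \<tau> - \<kappa>)))" unfolding hQ_def g_def ..
    ultimately have Qd: "Q t - Q 0 = r * \<epsilon> * (integral {-\<tau>..t-\<tau>} g - integral {-\<tau>-\<kappa>..t-\<tau>-\<kappa>} g)"
      using eQ t0 has_integral_unique by metis
    have Q0: "Q 0 \<ge> r * \<epsilon> * integral {-\<tau>-\<kappa>..0} g"
    proof -
      have "integral {-\<tau>-\<kappa>..0} g = integral {-\<tau>-\<kappa>..0} (\<lambda>\<theta>. fst (\<psi> \<theta>) * fst (snd (\<psi> \<theta>)))"
        by (rule integral_cong) (use histc in \<open>auto simp: g_def\<close>)
      moreover have "Q 0 = snd (snd (\<psi> 0))" using histc[of 0] tau0 kap0 by simp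
      ultimately show ?thesis using assms(9) unfolding \<epsilon>_def by simp
    qed
    have A: "integral {-\<tau>..t-\<tau>} g = F0 (t-\<tau>) - F0 (-\<tau>)" using Fd[of "-\<tau>" "t-\<tau>"] tau0 kap0 t0 by simp
    have B': "integral {-\<tau>-\<kappa>..t-\<tau>-\<kappa>} g = F0 (t-\<tau>-\<kappa>) - F0 (-\<tau>-\<kappa>)"
      using Fd[of "-\<tau>-\<kappa>" "t-\<tau>-\<kappa>"] tau0 kap0 t0 by simp
    have C: "integral {-\<tau>-\<kappa>..0} g = F0 0 - F0 (-\<tau>-\<kappa>)" using Fd[of "-\<tau>-\<kappa>" 0] tau0 kap0 t0 by simp
    have D1: "F0 0 - F0 (-\<tau>) \<ge> 0" using Fd[of "-\<tau>" 0] tau0 kap0 t0 by simp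
    have D2: "F0 (t-\<tau>) - F0 (t-\<tau>-\<kappa>) \<ge> 0" using Fd[of "t-\<tau>-\<kappa>" "t-\<tau>"] tau0 kap0 t0 by simp
    have re: "r * \<epsilon> \<ge> 0" using r0 eps0 by simp
    have "Q t \<ge> r * \<epsilon> * ((F0 0 - F0 (-\<tau>)) + (F0 (t-\<tau>) - F0 (t-\<tau>-\<kappa>)))"
    proof -
      have "Q t = Q 0 + r * \<epsilon> * (F0 (t-\<tau>) - F0 (-\<tau>) - (F0 (t-\<tau>-\<kappa>) - F0 (-\<tau>-\<kappa>)))"
        using Qd A B' by simp
      moreover have "Q 0 \<ge> r * \<epsilon> * (F0 0 - F0 (-\<tau>-\<kappa>))" using Q0 C by simp
      ultimately show ?thesis by (simp add: algebra_simps)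
    qed
    moreover have "r * \<epsilon> * ((F0 0 - F0 (-\<tau>)) + (F0 (t-\<tau>) - F0 (t-\<tau>-\<kappa>))) \<ge> 0"
      using re D1 D2 by simp
    ultimately show ?thesis by linarith
  qed
  have P1: "\<forall>t\<ge>0. S t \<ge> 0 \<and> I t \<ge> 0 \<and> Q t \<ge> 0 \<and> S t + I t + Q t = 1"
    using SI Qnn sum1 by blast
  have simpl: "in_simplex (S u, I u, Q u)" if "u \<ge> -\<tau>-\<kappa>" for u
  proof (cases "u \<le> 0")
    case True
    then have "u \<in> {-\<tau>-\<kappa>..0}" using that by auto
    then show ?thesis using hist assms(7) by metis
  next
    case False
    then show ?thesis using P1 unfolding in_simplex_def by auto
  qed
  have cont_shift: "continuous_on A (\<lambda>\<theta>. (S (t+\<theta>), I (t+\<theta>), Q (t+\<theta>)))"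
    if "\<And>\<theta>. \<theta> \<in> A \<Longrightarrow> t + \<theta> \<ge> 0" for A t
  proof -
    have im: "(\<lambda>\<theta>. t + \<theta>) ` A \<subseteq> {0..}" using that by auto
    have "continuous_on A (\<lambda>\<theta>. S (t+\<theta>))"
      by (rule continuous_on_compose2[OF cS _ im]) (auto intro!: continuous_intros)
    moreover have "continuous_on A (\<lambda>\<theta>. I (t+\<theta>))"
      by (rule continuous_on_compose2[OF cI _ im]) (auto intro!: continuous_intros)
    moreover have "continuous_on A (\<lambda>\<theta>. Q (t+\<theta>))"
      by (rule continuous_on_compose2[OF cQ _ im]) (auto intro!: continuous_intros)
    ultimately show ?thesis by (intro continuous_on_Pair)
  qed
  have P2: "\<forall>t\<ge>\<tau>+\<kappa>. Ctilde \<tau> \<kappa> (\<lambda>\<theta>. (S (t+\<theta>), I (t+\<theta>), Q (t+\<theta>)))"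
  proof (intro allI impI)
    fix t assume t: "t \<ge> \<tau> + \<kappa>"
    have "continuous_on {-\<tau>-\<kappa>..0} (\<lambda>\<theta>. (S (t+\<theta>), I (t+\<theta>), Q (t+\<theta>)))"
      by (rule cont_shift) (use t in auto)
    moreover have "\<forall>\<theta>\<in>{-\<tau>-\<kappa>..0}. in_simplex (S (t+\<theta>), I (t+\<theta>), Q (t+\<theta>))"
      using simpl t tau0 kap0 by auto
    ultimately show "Ctilde \<tau> \<kappa> (\<lambda>\<theta>. (S (t+\<theta>), I (t+\<theta>), Q (t+\<theta>)))"
      unfolding Ctilde_def by simp
  qed
  have P3: "Ctilde \<tau> \<kappa> \<psi> \<longrightarrow> (\<forall>t\<ge>0. Ctilde \<tau> \<kappa> (\<lambda>\<theta>. (S (t+\<theta>), I (t+\<theta>), Q (t+\<theta>))))"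
  proof (intro impI allI)
    fix t :: real assume Cp: "Ctilde \<tau> \<kappa> \<psi>" and t0: "t \<ge> 0"
    show "Ctilde \<tau> \<kappa> (\<lambda>\<theta>. (S (t+\<theta>), I (t+\<theta>), Q (t+\<theta>)))"
    proof (cases "t \<ge> \<tau> + \<kappa>")
      case True
      then show ?thesis using P2 by blast
    next
      case False
      have cpsi: "continuous_on {-\<tau>-\<kappa>..0} \<psi>" using Cp unfolding Ctilde_def by blast
      have c1: "continuous_on {-\<tau>-\<kappa>..-t} (\<lambda>\<theta>. (S (t+\<theta>), I (t+\<theta>), Q (t+\<theta>)))"
      proof -
        have im: "(\<lambda>\<theta>. t + \<theta>) ` {-\<tau>-\<kappa>..-t} \<subseteq> {-\<tau>-\<kappa>..0}" using t0 by auto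
        have "continuous_on {-\<tau>-\<kappa>..-t} (\<lambda>\<theta>. \<psi> (t+\<theta>))"
          by (rule continuous_on_compose2[OF cpsi _ im]) (auto intro!: continuous_intros)
        moreover have "\<psi> (t+\<theta>) = (S (t+\<theta>), I (t+\<theta>), Q (t+\<theta>))" if "\<theta> \<in> {-\<tau>-\<kappa>..-t}" for \<theta>
          using hist[of "t+\<theta>"] that t0 by auto
        ultimately show ?thesis using continuous_on_cong by (metis (no_types, lifting))
      qed
      have c2: "continuous_on {-t..0} (\<lambda>\<theta>. (S (t+\<theta>), I (t+\<theta>), Q (t+\<theta>)))"
        by (rule cont_shift) auto
      have "{-\<tau>-\<kappa>..0} = {-\<tau>-\<kappa>..-t} \<union> {-t..(0::real)}" using False t0 by auto
      then have "continuous_on {-\<tau>-\<kappa>..0} (\<lambda>\<theta>. (S (t+\<theta>), I (t+\<theta>), Q (t+\<theta>)))"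
        using continuous_on_closed_Un[OF closed_atLeastAtMost closed_atLeastAtMost c1 c2] by simp
      moreover have "\<forall>\<theta>\<in>{-\<tau>-\<kappa>..0}. in_simplex (S (t+\<theta>), I (t+\<theta>), Q (t+\<theta>))"
        using simpl t0 by auto
      ultimately show ?thesis unfolding Ctilde_def by simp
    qed
  qed
  show ?thesis using P1 P2 P3 by blast
qed

end
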